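(* Let $n$ be a number and $p\ge 0$ an integer such that the ball $\langle n;-\frac{1}{2^p}\rangle$ is balanced. Then for every integer $m\ge 0$, every integer $q\ge 0$, and every $a$ that is either an odd integer with $0<a<2^q$ or $a=0$, such that $m+a2^{-q}>0$, and for any game $H$ whose value is $m+\frac{a}{2^q}$, \[\Big\langle n;-\frac{1}{2^p}\Big\rangle\mathbin{:}H=n+\frac{1}{2^p}-\frac{1}{2^{p+m}}+\frac{a}{2^{p+m+q+1}}.\]
   Context: Games are short normal-play combinatorial games, written $\{L\mid R\}$, with the usual disjunctive sum and equality of values. A number is a game with $G^L<G<G^R$ for all options, with values identified with dyadic rationals. The ordinal sum is $G\mathbin{:}H\cong\{L(G),\,G\mathbin{:}L(H)\mid R(G),\,G\mathbin{:}R(H)\}$. For numbers $m,\Delta$, the ball $\langle m;\Delta\rangle$ is the game $\{x\mid y\}$ where $x,y$ are the canonical forms of $m+\Delta$ and $m-\Delta$; it is balanced if $\langle m;\Delta\rangle+\langle m;\Delta\rangle=m+m$. *)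

theory Defs
  imports Complex_Main
begin

datatype game = Game "game list" "game list"

primrec left :: "game \<Rightarrow> game list" where "left (Game L R) = L"
primrec right :: "game \<Rightarrow> game list" where "right (Game L R) = R"

lemma size_opt_lt:
  "x \<in> set xs \<Longrightarrow> size x < size (Game xs ys)"
  "y \<in> set ys \<Longrightarrow> size y < size (Game xs ys)"
  by (simp_all add: less_Suc_eq_le trans_le_add1 trans_le_add2 size_list_estimation')

lemma size_left_lt: "x \<in> set (left g) \<Longrightarrow> size x < size g"
  by (cases g) (auto dest: size_opt_lt)
lemma size_right_lt: "x \<in> set (right g) \<Longrightarrow> size x < size g"
  by (cases g) (auto dest: size_opt_lt)

function game_le :: "game \<Rightarrow> game \<Rightarrow> bool" where
  "game_le G H =
     ((\<forall>gl \<in> set (left G). \<not> game_le H gl) \<and> (\<forall>hr \<in> set (right H). \<not> game_le hr G))"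
  by auto
termination
  by (relation "measure (\<lambda>(g, h). size g + size h)")
     (auto dest: size_left_lt size_right_lt)

definition game_eq :: "game \<Rightarrow> game \<Rightarrow> bool" where
  "game_eq G H \<longleftrightarrow> game_le G H \<and> game_le H G"

primrec game_neg :: "game \<Rightarrow> game" where
  "game_neg (Game L R) = Game (map game_neg R) (map game_neg L)"

function game_plus :: "game \<Rightarrow> game \<Rightarrow> game" where
  "game_plus G H =
     Game (map (\<lambda>gl. game_plus gl H) (left G) @ map (\<lambda>hl. game_plus G hl) (left H))
          (map (\<lambda>gr. game_plus gr H) (right G) @ map (\<lambda>hr. game_plus G hr) (right H))"
  by auto
termination
  by (relation "measure (\<lambda>(g, h). size g + size h)")
     (auto dest: size_left_lt size_right_lt)

primrec ordsum :: "game \<Rightarrow> game \<Rightarrow> game" where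
  "ordsum G (Game L R) = Game (left G @ map (ordsum G) L) (right G @ map (ordsum G) R)"

primrec nat_game :: "nat \<Rightarrow> game" where
  "nat_game 0 = Game [] []"
| "nat_game (Suc k) = Game [nat_game k] []"

definition int_game :: "int \<Rightarrow> game" where
  "int_game z = (if 0 \<le> z then nat_game (nat z) else game_neg (nat_game (nat (- z))))"

text \<open>Canonical form of the dyadic rational j / 2^k.\<close>
function dy_game :: "int \<Rightarrow> nat \<Rightarrow> game" where
  "dy_game j k =
     (if k = 0 then int_game j
      else if even j then dy_game (j div 2) (k - 1)
      else Game [dy_game (j - 1) k] [dy_game (j + 1) k])"
  by auto
termination
  by (relation "measure (\<lambda>(j, k). 2 * k + (if even j then 0 else 1))") auto

definition dyadic :: "rat \<Rightarrow> bool" where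
  "dyadic x \<longleftrightarrow> (\<exists>(j::int) (k::nat). x = of_int j / 2 ^ k)"

text \<open>Canonical form of a dyadic rational x (unspecified for non-dyadic x).\<close>
definition canon :: "rat \<Rightarrow> game" where
  "canon x = (let k = (LEAST k::nat. \<exists>j::int. x * 2 ^ k = of_int j)
              in dy_game \<lfloor>x * 2 ^ k\<rfloor> k)"

definition ball_game :: "rat \<Rightarrow> rat \<Rightarrow> game" where
  "ball_game m \<Delta> = Game [canon (m + \<Delta>)] [canon (m - \<Delta>)]"

definition balanced :: "rat \<Rightarrow> rat \<Rightarrow> bool" where
  "balanced m \<Delta> \<longleftrightarrow>
     game_eq (game_plus (ball_game m \<Delta>) (ball_game m \<Delta>)) (game_plus (canon m) (canon m))"

end

theory Submission
  imports Defs
begin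

declare game_le.simps[simp del] game_plus.simps[simp del] dy_game.simps[simp del]


lemma le_unfold: "game_le G H \<longleftrightarrow> (\<forall>gl \<in> set (left G). \<not> game_le H gl) \<and> (\<forall>hr \<in> set (right H). \<not> game_le hr G)"
  by (rule game_le.simps)

lemma le_leftD: "game_le G H \<Longrightarrow> gl \<in> set (left G) \<Longrightarrow> \<not> game_le H gl"
  using le_unfold by blast
lemma le_rightD: "game_le G H \<Longrightarrow> hr \<in> set (right H) \<Longrightarrow> \<not> game_le hr G"
  using le_unfold by blast
lemma le_intro: "(\<And>gl. gl \<in> set (left G) \<Longrightarrow> \<not> game_le H gl) \<Longrightarrow> (\<And>hr. hr \<in> set (right H) \<Longrightarrow> \<not> game_le hr G) \<Longrightarrow> game_le G H"
  using le_unfold by blast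

lemma le_refl: "game_le G G"
proof (induction G rule: measure_induct_rule[where f=size])
  case (less G)
  show ?case
  proof (rule le_intro)
    fix gl assume gl: "gl \<in> set (left G)"
    show "\<not> game_le G gl"
    proof
      assume "game_le G gl"
      moreover have "game_le gl gl" using less gl size_left_lt by blast
      ultimately show False using le_leftD gl by blast
    qed
  next
    fix hr assume hr: "hr \<in> set (right G)"
    show "\<not> game_le hr G"
    proof
      assume "game_le hr G"
      moreover have "game_le hr hr" using less hr size_right_lt by blast
      ultimately show False using le_rightD hr by blast
    qed
  qed
qed

lemma not_le_left: "x \<in> set (left G) \<Longrightarrow> \<not> game_le G x"
  using le_leftD le_refl by blast
lemma not_right_le: "x \<in> set (right G) \<Longrightarrow> \<not> game_le x G"
  using le_rightD le_refl by blast

lemma le_trans_aux: "\<forall>(A::game) (B::game) (C::game). size A + size B + size C = s \<longrightarrow> game_le A B \<longrightarrow> game_le B C \<longrightarrow> game_le A C"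
proof (induction s rule: less_induct)
  case (less s)
  show ?case
  proof (intro allI impI)
    fix A B C :: game assume s: "size A + size B + size C = s" and AB: "game_le A B" and BC: "game_le B C"
    show "game_le A C"
    proof (rule le_intro)
      fix al assume al: "al \<in> set (left A)"
      show "\<not> game_le C al"
      proof
        assume "game_le C al"
        have "size B + size C + size al < s" using s size_left_lt[OF al] by simp
        then have "game_le B al" using less BC \<open>game_le C al\<close> by blast
        then show False using le_leftD[OF AB al] by blast
      qed
    next
      fix cr assume cr: "cr \<in> set (right C)"
      show "\<not> game_le cr A"
      proof
        assume "game_le cr A"
        have "size cr + size A + size B < s" using s size_right_lt[OF cr] by simp
        then have "game_le cr B" using less AB \<open>game_le cr A\<close> by blast
        then show False using le_rightD[OF BC cr] by blast
      qed
    qed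
  qed
qed

lemma le_trans: "game_le A B \<Longrightarrow> game_le B C \<Longrightarrow> game_le A C"
  using le_trans_aux by blast

lemma eq_refl: "game_eq G G" by (simp add: game_eq_def le_refl)
lemma eq_sym: "game_eq G H \<Longrightarrow> game_eq H G" by (simp add: game_eq_def)
lemma eq_trans: "game_eq A B \<Longrightarrow> game_eq B C \<Longrightarrow> game_eq A C"
  unfolding game_eq_def using le_trans by blast

lemma recog:
  assumes "\<And>gl. gl \<in> set (left G) \<Longrightarrow> \<not> game_le X gl"
    and "\<And>gr. gr \<in> set (right G) \<Longrightarrow> \<not> game_le gr X"
    and "\<And>xl. xl \<in> set (left X) \<Longrightarrow> \<exists>gl\<in>set (left G). game_le xl gl"
    and "\<And>xr. xr \<in> set (right X) \<Longrightarrow> \<exists>gr\<in>set (right G). game_le gr xr"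
  shows "game_eq G X"
  unfolding game_eq_def
proof
  show "game_le G X"
  proof (rule le_intro)
    fix xr assume xr: "xr \<in> set (right X)"
    then obtain gr where gr: "gr \<in> set (right G)" "game_le gr xr" using assms(4) by blast
    show "\<not> game_le xr G" using le_trans[OF gr(2)] not_right_le[OF gr(1)] by blast
  qed (use assms(1) in blast)
  show "game_le X G"
  proof (rule le_intro)
    fix xl assume xl: "xl \<in> set (left X)"
    then obtain gl where gl: "gl \<in> set (left G)" "game_le xl gl" using assms(3) by blast
    show "\<not> game_le G xl" using le_trans[OF _ gl(2)] not_le_left[OF gl(1)] by blast
  qed (use assms(2) in blast)
qed

lemma ordsum_le_aux: "\<forall>(H::game) (H'::game). size H + size H' = s \<longrightarrow> (game_le (ordsum G H) (ordsum G H') \<longleftrightarrow> game_le H H')"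
proof (induction s rule: less_induct)
  case (less s)
  show ?case
  proof (intro allI impI)
    fix H H' :: game assume s: "size H + size H' = s"
    obtain L R where H: "H = Game L R" by (cases H)
    obtain L' R' where H': "H' = Game L' R'" by (cases H')
    have lo: "left (ordsum G H) = left G @ map (ordsum G) L" using H by simp
    have ro: "right (ordsum G H') = right G @ map (ordsum G) R'" using H' by simp
    have A: "(\<forall>x\<in>set (left (ordsum G H)). \<not> game_le (ordsum G H') x) \<longleftrightarrow> (\<forall>hl\<in>set L. \<not> game_le H' hl)"
    proof -
      have 1: "\<forall>x\<in>set (left G). \<not> game_le (ordsum G H') x"
      proof
        fix x assume "x \<in> set (left G)"
        then have "x \<in> set (left (ordsum G H'))" using H' by simp
        then show "\<not> game_le (ordsum G H') x" by (rule not_le_left)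
      qed
      have 2: "\<forall>hl\<in>set L. game_le (ordsum G H') (ordsum G hl) \<longleftrightarrow> game_le H' hl"
      proof
        fix hl assume "hl \<in> set L"
        then have "size H' + size hl < s" using s H size_opt_lt(1)[of hl L R] by simp
        then show "game_le (ordsum G H') (ordsum G hl) \<longleftrightarrow> game_le H' hl" using less by blast
      qed
      show ?thesis unfolding lo using 1 2 by auto
    qed
    have B: "(\<forall>x\<in>set (right (ordsum G H')). \<not> game_le x (ordsum G H)) \<longleftrightarrow> (\<forall>hr\<in>set R'. \<not> game_le hr H)"
    proof -
      have 1: "\<forall>x\<in>set (right G). \<not> game_le x (ordsum G H)"
      proof
        fix x assume "x \<in> set (right G)"
        then have "x \<in> set (right (ordsum G H))" using H by simp
        then show "\<not> game_le x (ordsum G H)" by (rule not_right_le)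
      qed
      have 2: "\<forall>hr\<in>set R'. game_le (ordsum G hr) (ordsum G H) \<longleftrightarrow> game_le hr H"
      proof
        fix hr assume "hr \<in> set R'"
        then have "size hr + size H < s" using s H' size_opt_lt(2)[of hr R' L'] by simp
        then show "game_le (ordsum G hr) (ordsum G H) \<longleftrightarrow> game_le hr H" using less by blast
      qed
      show ?thesis unfolding ro using 1 2 by auto
    qed
    have C: "game_le H H' \<longleftrightarrow> (\<forall>hl\<in>set L. \<not> game_le H' hl) \<and> (\<forall>hr\<in>set R'. \<not> game_le hr H)"
      using le_unfold[of H H'] H H' by simp
    show "game_le (ordsum G H) (ordsum G H') \<longleftrightarrow> game_le H H'"
      unfolding C using A B le_unfold[of "ordsum G H" "ordsum G H'"] by blast
  qed
qed

lemma ordsum_le: "game_le (ordsum G H) (ordsum G H') \<longleftrightarrow> game_le H H'"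
  using ordsum_le_aux by blast

lemma ordsum_eq: "game_eq H H' \<Longrightarrow> game_eq (ordsum G H) (ordsum G H')"
  by (simp add: game_eq_def ordsum_le)

lemma plus_left: "left (game_plus A C) = map (\<lambda>x. game_plus x C) (left A) @ map (game_plus A) (left C)"
  by (subst game_plus.simps) simp
lemma plus_right: "right (game_plus A C) = map (\<lambda>x. game_plus x C) (right A) @ map (game_plus A) (right C)"
  by (subst game_plus.simps) simp

lemma plus_mono1_aux: "\<forall>(A::game) (A'::game) (C::game). size A + size A' + size C = s \<longrightarrow>
   ((game_le A A' \<longrightarrow> game_le (game_plus A C) (game_plus A' C)) \<and>
    (game_le (game_plus A C) (game_plus A' C) \<longrightarrow> game_le A A'))"
proof (induction s rule: less_induct)
  case (less s)
  show ?case
  proof (intro allI impI conjI)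
    fix A A' C :: game assume s: "size A + size A' + size C = s"
    {
      assume AA: "game_le A A'"
      show "game_le (game_plus A C) (game_plus A' C)"
      proof (rule le_intro)
        fix x assume "x \<in> set (left (game_plus A C))"
        then consider (a) al where "al \<in> set (left A)" "x = game_plus al C"
          | (c) cl where "cl \<in> set (left C)" "x = game_plus A cl"
          unfolding plus_left by auto
        then show "\<not> game_le (game_plus A' C) x"
        proof cases
          case a
          have "size A' + size al + size C < s" using s size_left_lt[OF a(1)] by simp
          then show ?thesis using less a le_leftD[OF AA a(1)] by blast
        next
          case c
          have "size A + size A' + size cl < s" using s size_left_lt[OF c(1)] by simp
          then have "game_le (game_plus A cl) (game_plus A' cl)" using less AA by blast
          moreover have "game_plus A' cl \<in> set (left (game_plus A' C))" using c unfolding plus_left by simp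
          ultimately show ?thesis using c not_le_left le_trans by blast
        qed
      next
        fix x assume "x \<in> set (right (game_plus A' C))"
        then consider (a) ar where "ar \<in> set (right A')" "x = game_plus ar C"
          | (c) cr where "cr \<in> set (right C)" "x = game_plus A' cr"
          unfolding plus_right by auto
        then show "\<not> game_le x (game_plus A C)"
        proof cases
          case a
          have "size ar + size A + size C < s" using s size_right_lt[OF a(1)] by simp
          then show ?thesis using less a le_rightD[OF AA a(1)] by blast
        next
          case c
          have "size A + size A' + size cr < s" using s size_right_lt[OF c(1)] by simp
          then have "game_le (game_plus A cr) (game_plus A' cr)" using less AA by blast
          moreover have "game_plus A cr \<in> set (right (game_plus A C))" using c unfolding plus_right by simp
          ultimately show ?thesis using c not_right_le le_trans by blast
        qed
      qed
    }
    {
      assume AC: "game_le (game_plus A C) (game_plus A' C)"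
      show "game_le A A'"
      proof (rule le_intro)
        fix al assume al: "al \<in> set (left A)"
        show "\<not> game_le A' al"
        proof
          assume "game_le A' al"
          have "size A' + size al + size C < s" using s size_left_lt[OF al] by simp
          then have "game_le (game_plus A' C) (game_plus al C)" using less \<open>game_le A' al\<close> by blast
          moreover have "game_plus al C \<in> set (left (game_plus A C))" using al unfolding plus_left by simp
          ultimately show False using AC not_le_left le_trans by blast
        qed
      next
        fix ar assume ar: "ar \<in> set (right A')"
        show "\<not> game_le ar A"
        proof
          assume "game_le ar A"
          have "size ar + size A + size C < s" using s size_right_lt[OF ar] by simp
          then have "game_le (game_plus ar C) (game_plus A C)" using less \<open>game_le ar A\<close> by blast
          moreover have "game_plus ar C \<in> set (right (game_plus A' C))" using ar unfolding plus_right by simp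
          ultimately show False using AC not_right_le le_trans by blast
        qed
      qed
    }
  qed
qed

lemma plus_mono1: "game_le A A' \<longleftrightarrow> game_le (game_plus A C) (game_plus A' C)"
  using plus_mono1_aux by blast

lemma plus_mono2_aux: "\<forall>(A::game) (A'::game) (C::game). size A + size A' + size C = s \<longrightarrow>
   ((game_le A A' \<longrightarrow> game_le (game_plus C A) (game_plus C A')) \<and>
    (game_le (game_plus C A) (game_plus C A') \<longrightarrow> game_le A A'))"
proof (induction s rule: less_induct)
  case (less s)
  show ?case
  proof (intro allI impI conjI)
    fix A A' C :: game assume s: "size A + size A' + size C = s"
    {
      assume AA: "game_le A A'"
      show "game_le (game_plus C A) (game_plus C A')"
      proof (rule le_intro)
        fix x assume "x \<in> set (left (game_plus C A))"
        then consider (a) al where "al \<in> set (left A)" "x = game_plus C al"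
          | (c) cl where "cl \<in> set (left C)" "x = game_plus cl A"
          unfolding plus_left by auto
        then show "\<not> game_le (game_plus C A') x"
        proof cases
          case a
          have "size A' + size al + size C < s" using s size_left_lt[OF a(1)] by simp
          then show ?thesis using less a le_leftD[OF AA a(1)] by blast
        next
          case c
          have "size A + size A' + size cl < s" using s size_left_lt[OF c(1)] by simp
          then have "game_le (game_plus cl A) (game_plus cl A')" using less AA by blast
          moreover have "game_plus cl A' \<in> set (left (game_plus C A'))" using c unfolding plus_left by simp
          ultimately show ?thesis using c not_le_left le_trans by blast
        qed
      next
        fix x assume "x \<in> set (right (game_plus C A'))"
        then consider (a) ar where "ar \<in> set (right A')" "x = game_plus C ar"
          | (c) cr where "cr \<in> set (right C)" "x = game_plus cr A'"
          unfolding plus_right by auto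
        then show "\<not> game_le x (game_plus C A)"
        proof cases
          case a
          have "size ar + size A + size C < s" using s size_right_lt[OF a(1)] by simp
          then show ?thesis using less a le_rightD[OF AA a(1)] by blast
        next
          case c
          have "size A + size A' + size cr < s" using s size_right_lt[OF c(1)] by simp
          then have "game_le (game_plus cr A) (game_plus cr A')" using less AA by blast
          moreover have "game_plus cr A \<in> set (right (game_plus C A))" using c unfolding plus_right by simp
          ultimately show ?thesis using c not_right_le le_trans by blast
        qed
      qed
    }
    {
      assume AC: "game_le (game_plus C A) (game_plus C A')"
      show "game_le A A'"
      proof (rule le_intro)
        fix al assume al: "al \<in> set (left A)"
        show "\<not> game_le A' al"
        proof
          assume "game_le A' al"
          have "size A' + size al + size C < s" using s size_left_lt[OF al] by simp
          then have "game_le (game_plus C A') (game_plus C al)" using less \<open>game_le A' al\<close> by blast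
          moreover have "game_plus C al \<in> set (left (game_plus C A))" using al unfolding plus_left by simp
          ultimately show False using AC not_le_left le_trans by blast
        qed
      next
        fix ar assume ar: "ar \<in> set (right A')"
        show "\<not> game_le ar A"
        proof
          assume "game_le ar A"
          have "size ar + size A + size C < s" using s size_right_lt[OF ar] by simp
          then have "game_le (game_plus C ar) (game_plus C A)" using less \<open>game_le ar A\<close> by blast
          moreover have "game_plus C ar \<in> set (right (game_plus C A'))" using ar unfolding plus_right by simp
          ultimately show False using AC not_right_le le_trans by blast
        qed
      qed
    }
  qed
qed

lemma plus_mono2: "game_le A A' \<longleftrightarrow> game_le (game_plus C A) (game_plus C A')"
  using plus_mono2_aux by blast

definition dexp :: "rat \<Rightarrow> nat" where "dexp x = (LEAST k. \<exists>j::int. x * 2^k = of_int j)"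

lemma canon_alt: "canon x = dy_game \<lfloor>x * 2 ^ dexp x\<rfloor> (dexp x)"
  by (simp add: canon_def dexp_def Let_def)

lemma dexp_min: "x * 2^k = of_int j \<Longrightarrow> dexp x \<le> k"
  unfolding dexp_def by (rule Least_le) blast

lemma dexp_int: assumes "dyadic x" shows "x * 2^dexp x = of_int \<lfloor>x * 2^dexp x\<rfloor>"
proof -
  obtain j k where "x = of_int j / 2^k" using assms unfolding dyadic_def by blast
  then have "x * 2^k = of_int j" by simp
  then have "\<exists>k (j::int). x * 2^k = of_int j" by blast
  then have "\<exists>j::int. x * 2^dexp x = of_int j" unfolding dexp_def by (rule LeastI_ex)
  then show ?thesis by auto
qed

lemma dexp_odd: assumes "dyadic x" "dexp x > 0" shows "odd \<lfloor>x * 2^dexp x\<rfloor>"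
proof
  let ?k = "dexp x" let ?j = "\<lfloor>x * 2^dexp x\<rfloor>"
  assume "even ?j"
  then obtain i where i: "?j = 2 * i" by blast
  have "(2::rat)^?k = 2 * 2^(?k - 1)" using assms(2) by (cases "dexp x") simp_all
  then have "x * 2^(?k - 1) * 2 = of_int ?j" using dexp_int[OF assms(1)] by (simp add: algebra_simps)
  then have "x * 2^(?k - 1) = of_int i" using i by simp
  then have "dexp x \<le> ?k - 1" by (rule dexp_min)
  then show False using assms(2) by simp
qed

lemma dexp_of_int: "dexp (of_int j) = 0"
  using dexp_min[of "of_int j" 0 j] by simp

lemma dy_canon: "dy_game j k = canon (of_int j / 2^k)"
proof (induction j k rule: dy_game.induct)
  case (1 j k)
  show ?case
  proof (cases "k = 0")
    case True
    then show ?thesis by (simp add: canon_alt dexp_of_int)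
  next
    case k: False
    show ?thesis
    proof (cases "even j")
      case True
      then have "dy_game j k = dy_game (j div 2) (k - 1)" using k by (subst dy_game.simps) simp
      also have "\<dots> = canon (of_int (j div 2) / 2^(k-1))" using 1(1) k True by simp
      also have "of_int (j div 2) / 2^(k-1) = (of_int j / 2^k :: rat)"
      proof -
        have p: "(2::rat)^k = 2 * 2^(k - 1)" using k by (cases k) simp_all
        obtain i where i: "j = 2 * i" using True by blast
        then have "j div 2 = i" by simp
        then show ?thesis using p i by simp
      qed
      finally show ?thesis .
    next
      case odd: False
      let ?x = "of_int j / 2^k :: rat"
      have x: "?x * 2^k = of_int j" by simp
      have "dexp ?x = k"
      proof (rule antisym)
        show "dexp ?x \<le> k" using x by (rule dexp_min)
        show "k \<le> dexp ?x"
        proof (rule ccontr)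
          assume "\<not> k \<le> dexp ?x"
          then have lt: "dexp ?x < k" by simp
          have "dyadic ?x" unfolding dyadic_def by blast
          then have e: "?x * 2^dexp ?x = of_int \<lfloor>?x * 2^dexp ?x\<rfloor>" by (rule dexp_int)
          have "(2::rat)^k = 2^dexp ?x * 2^(k - dexp ?x)" using lt by (simp add: power_add[symmetric])
          then have "of_int j = ?x * 2^dexp ?x * 2^(k - dexp ?x)" using x by (simp add: algebra_simps)
          also have "\<dots> = of_int (\<lfloor>?x * 2^dexp ?x\<rfloor> * 2^(k - dexp ?x))" using e by simp
          finally have "j = \<lfloor>?x * 2^dexp ?x\<rfloor> * 2^(k - dexp ?x)" by (simp only: of_int_eq_iff)
          moreover have "even (\<lfloor>?x * 2^dexp ?x\<rfloor> * (2::int)^(k - dexp ?x))" using lt by simp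
          ultimately show False using odd by metis
        qed
      qed
      then have "canon ?x = dy_game j k" using x by (simp add: canon_alt)
      then show ?thesis by simp
    qed
  qed
qed

lemma canon_odd: assumes "odd N" "K > 0"
  shows "canon (of_int N / 2^K) = Game [canon (of_int N / 2^K - 1 / 2^K)] [canon (of_int N / 2^K + 1 / 2^K)]"
proof -
  have "canon (of_int N / 2^K) = dy_game N K" by (simp add: dy_canon)
  also have "\<dots> = Game [dy_game (N - 1) K] [dy_game (N + 1) K]" using assms by (subst dy_game.simps) simp
  finally show ?thesis by (simp add: dy_canon diff_divide_distrib add_divide_distrib)
qed

definition lo :: "rat \<Rightarrow> rat list" where
  "lo x = (if dexp x = 0 then (if 0 < x then [x - 1] else []) else [x - 1 / 2^dexp x])"
definition ro :: "rat \<Rightarrow> rat list" where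
  "ro x = (if dexp x = 0 then (if x < 0 then [x + 1] else []) else [x + 1 / 2^dexp x])"

lemma dyadic_of_int: "dyadic (of_int j)" unfolding dyadic_def by (rule exI[of _ j], rule exI[of _ 0]) simp
lemma dyadic_of_nat: "dyadic (of_nat j)" using dyadic_of_int[of "int j"] by simp
lemma dyadic_pow: "dyadic (1 / 2^k)" unfolding dyadic_def by (rule exI[of _ 1], rule exI[of _ k]) simp
lemma dyadic_add: assumes "dyadic x" "dyadic y" shows "dyadic (x + y)"
proof -
  obtain a i where x: "x = of_int a / 2^i" using assms(1) unfolding dyadic_def by blast
  obtain b j where y: "y = of_int b / 2^j" using assms(2) unfolding dyadic_def by blast
  have "x + y = of_int (a * 2^j + b * 2^i) / 2^(i+j)" unfolding x y by (simp add: field_simps power_add)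
  then show ?thesis unfolding dyadic_def by blast
qed
lemma dyadic_neg: assumes "dyadic x" shows "dyadic (- x)"
proof -
  obtain a i where x: "x = of_int a / 2^i" using assms(1) unfolding dyadic_def by blast
  have "- x = of_int (- a) / 2^i" unfolding x by simp
  then show ?thesis unfolding dyadic_def by blast
qed
lemma dyadic_diff: "dyadic x \<Longrightarrow> dyadic y \<Longrightarrow> dyadic (x - y)"
  using dyadic_add[of x "- y"] dyadic_neg[of y] by simp

lemma dyadic_one: "dyadic 1" using dyadic_pow[of 0] by simp
lemma lo_props: assumes "dyadic x" "l \<in> set (lo x)" shows "dyadic l \<and> l < x"
proof (cases "dexp x = 0")
  case True
  then have "l = x - 1" using assms(2) unfolding lo_def by (cases "0 < x") auto
  then show ?thesis using dyadic_diff[OF assms(1) dyadic_one] by simp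
next
  case False
  then have "l = x - 1 / 2^dexp x" using assms(2) unfolding lo_def by simp
  then show ?thesis using dyadic_diff[OF assms(1) dyadic_pow] by simp
qed
lemma ro_props: assumes "dyadic x" "r \<in> set (ro x)" shows "dyadic r \<and> x < r"
proof (cases "dexp x = 0")
  case True
  then have "r = x + 1" using assms(2) unfolding ro_def by (cases "x < 0") auto
  then show ?thesis using dyadic_add[OF assms(1) dyadic_one] by simp
next
  case False
  then have "r = x + 1 / 2^dexp x" using assms(2) unfolding ro_def by simp
  then show ?thesis using dyadic_add[OF assms(1) dyadic_pow] by simp
qed

lemma int_game_pos: "0 < j \<Longrightarrow> int_game j = Game [int_game (j - 1)] []"
proof -
  assume j: "0 < j"
  have "nat j = Suc (nat (j - 1))" using j by simp
  then show ?thesis using j by (simp add: int_game_def)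
qed
lemma int_game_neg: "j < 0 \<Longrightarrow> int_game j = Game [] [int_game (j + 1)]"
proof -
  assume j: "j < 0"
  have "nat (- j) = Suc (nat (- j - 1))" using j by simp
  then have "int_game j = Game [] [game_neg (nat_game (nat (- j - 1)))]" using j by (simp add: int_game_def)
  moreover have "int_game (j + 1) = game_neg (nat_game (nat (- j - 1)))"
  proof (cases "j = -1")
    case True then show ?thesis by (simp add: int_game_def)
  next
    case False then show ?thesis using j by (simp add: int_game_def)
  qed
  ultimately show ?thesis by simp
qed
lemma int_game_zero: "int_game 0 = Game [] []" by (simp add: int_game_def)

lemma canon_int: "canon (of_int j) = int_game j"
  using dy_canon[of j 0] by (simp add: dy_game.simps)

lemma canon_struct: assumes "dyadic x" shows "canon x = Game (map canon (lo x)) (map canon (ro x))"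
proof (cases "dexp x = 0")
  case True
  define j where "j = \<lfloor>x\<rfloor>"
  have x: "x = of_int j" using dexp_int[OF assms] True unfolding j_def by simp
  have c: "canon x = int_game j" unfolding x by (rule canon_int)
  consider "0 < j" | "j < 0" | "j = 0" by linarith
  then show ?thesis
  proof cases
    case 1
    then have "canon (x - 1) = int_game (j - 1)" unfolding x using canon_int[of "j - 1"] by simp
    then show ?thesis using 1 c True int_game_pos[OF 1] unfolding lo_def ro_def x by simp
  next
    case 2
    then have "canon (x + 1) = int_game (j + 1)" unfolding x using canon_int[of "j + 1"] by simp
    then show ?thesis using 2 c True int_game_neg[OF 2] unfolding lo_def ro_def x by simp
  next
    case 3
    then show ?thesis using c True int_game_zero unfolding lo_def ro_def x by simp
  qed
next
  case False
  let ?k = "dexp x" let ?j = "\<lfloor>x * 2^dexp x\<rfloor>"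
  have x: "x = of_int ?j / 2^?k" using dexp_int[OF assms] by (simp add: field_simps)
  have "odd ?j" using dexp_odd[OF assms] False by simp
  then have "canon (of_int ?j / 2^?k) = Game [canon (of_int ?j / 2^?k - 1 / 2^?k)] [canon (of_int ?j / 2^?k + 1 / 2^?k)]"
    using False by (intro canon_odd) auto
  then show ?thesis using False unfolding lo_def ro_def by (simp only: x[symmetric]) simp
qed

lemma NT: assumes "dyadic c" "dyadic d" "c < d"
  shows "(\<exists>l\<in>set (lo d). c \<le> l) \<or> (\<exists>r\<in>set (ro c). r \<le> d)"
proof -
  let ?k = "dexp c" let ?k' = "dexp d"
  define jc where "jc = \<lfloor>c * 2^?k\<rfloor>"
  define jd where "jd = \<lfloor>d * 2^?k'\<rfloor>"
  have ec: "c * 2^?k = of_int jc" using dexp_int[OF assms(1)] unfolding jc_def by simp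
  have ed: "d * 2^?k' = of_int jd" using dexp_int[OF assms(2)] unfolding jd_def by simp
  consider "?k' > 0" "?k \<le> ?k'" | "?k > 0" "?k' < ?k" | "?k = 0" "?k' = 0" by linarith
  then show ?thesis
  proof cases
    case 1
    have "c * 2^?k' = c * 2^?k * 2^(?k' - ?k)" using 1 by (simp add: mult.assoc power_add[symmetric])
    also have "\<dots> = of_int (jc * 2^(?k' - ?k))" using ec by simp
    finally have c1: "c * 2^?k' = of_int (jc * 2^(?k' - ?k))" .
    have "c * 2^?k' < d * 2^?k'" using assms(3) by simp
    then have "(of_int (jc * 2^(?k' - ?k)) :: rat) < of_int jd" using c1 ed by simp
    then have "jc * 2^(?k' - ?k) < jd" by (simp only: of_int_less_iff)
    then have "jc * 2^(?k' - ?k) \<le> jd - 1" by simp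
    then have "c * 2^?k' \<le> d * 2^?k' - 1" using c1 ed by (metis of_int_1 of_int_diff of_int_le_iff)
    then have "c \<le> d - 1 / 2^?k'" by (simp add: field_simps)
    then show ?thesis using 1 unfolding lo_def by simp
  next
    case 2
    have "d * 2^?k = d * 2^?k' * 2^(?k - ?k')" using 2 by (simp add: mult.assoc power_add[symmetric])
    also have "\<dots> = of_int (jd * 2^(?k - ?k'))" using ed by simp
    finally have d1: "d * 2^?k = of_int (jd * 2^(?k - ?k'))" .
    have "c * 2^?k < d * 2^?k" using assms(3) by simp
    then have "(of_int jc :: rat) < of_int (jd * 2^(?k - ?k'))" using d1 ec by simp
    then have "jc < jd * 2^(?k - ?k')" by (simp only: of_int_less_iff)
    then have "jc + 1 \<le> jd * 2^(?k - ?k')" by simp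
    then have "c * 2^?k + 1 \<le> d * 2^?k" using d1 ec by (metis of_int_1 of_int_add of_int_le_iff)
    then have "c + 1 / 2^?k \<le> d" by (simp add: field_simps)
    then show ?thesis using 2 unfolding ro_def by simp
  next
    case 3
    have c: "c = of_int jc" using ec 3 by simp
    have d: "d = of_int jd" using ed 3 by simp
    have "jc < jd" using assms(3) c d by simp
    show ?thesis
    proof (cases "0 < d")
      case True
      have "c \<le> d - 1" using \<open>jc < jd\<close> c d by (metis of_int_1 of_int_diff of_int_le_iff zle_diff1_eq)
      then show ?thesis using True 3 unfolding lo_def by simp
    next
      case False
      have "c + 1 \<le> d" using \<open>jc < jd\<close> c d by (metis of_int_1 of_int_add of_int_le_iff zless_imp_add1_zle)
      then show ?thesis using False assms(3) 3 unfolding ro_def by simp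
    qed
  qed
qed

lemma canon_left_size: "dyadic x \<Longrightarrow> l \<in> set (lo x) \<Longrightarrow> size (canon l) < size (canon x)"
  by (rule size_left_lt, subst canon_struct, auto)
lemma canon_right_size: "dyadic x \<Longrightarrow> r \<in> set (ro x) \<Longrightarrow> size (canon r) < size (canon x)"
  by (rule size_right_lt, subst canon_struct, auto)
lemma canon_left_mem: "dyadic x \<Longrightarrow> l \<in> set (lo x) \<Longrightarrow> canon l \<in> set (left (canon x))"
  by (subst canon_struct, auto)
lemma canon_right_mem: "dyadic x \<Longrightarrow> r \<in> set (ro x) \<Longrightarrow> canon r \<in> set (right (canon x))"
  by (subst canon_struct, auto)
lemma canon_left_cases: "dyadic x \<Longrightarrow> g \<in> set (left (canon x)) \<Longrightarrow> \<exists>l\<in>set (lo x). g = canon l"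
  by (subst (asm) canon_struct, auto)
lemma canon_right_cases: "dyadic x \<Longrightarrow> g \<in> set (right (canon x)) \<Longrightarrow> \<exists>r\<in>set (ro x). g = canon r"
  by (subst (asm) canon_struct, auto)

lemma canon_order_aux: "\<forall>c d. size (canon c) + size (canon d) = s \<longrightarrow> dyadic c \<longrightarrow> dyadic d \<longrightarrow>
   (c \<le> d \<longrightarrow> game_le (canon c) (canon d)) \<and> (c < d \<longrightarrow> \<not> game_le (canon d) (canon c))"
proof (induction s rule: less_induct)
  case (less s)
  have IH: "\<And>c' d'. size (canon c') + size (canon d') < s \<Longrightarrow> dyadic c' \<Longrightarrow> dyadic d' \<Longrightarrow>
     (c' \<le> d' \<longrightarrow> game_le (canon c') (canon d')) \<and> (c' < d' \<longrightarrow> \<not> game_le (canon d') (canon c'))"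
    using less by blast
  show ?case
  proof (intro allI impI conjI)
    fix c d :: rat assume s: "size (canon c) + size (canon d) = s" and dc: "dyadic c" and dd: "dyadic d"
    {
      assume cd: "c \<le> d"
      show "game_le (canon c) (canon d)"
      proof (rule le_intro)
        fix gl assume "gl \<in> set (left (canon c))"
        then obtain l where l: "l \<in> set (lo c)" "gl = canon l" using canon_left_cases[OF dc] by blast
        have "size (canon l) + size (canon d) < s" using canon_left_size[OF dc l(1)] s by simp
        moreover have "dyadic l" "l < d" using lo_props[OF dc l(1)] cd by auto
        ultimately show "\<not> game_le (canon d) gl" using IH[of l d] dd l(2) by blast
      next
        fix gr assume "gr \<in> set (right (canon d))"
        then obtain r where r: "r \<in> set (ro d)" "gr = canon r" using canon_right_cases[OF dd] by blast
        have "size (canon c) + size (canon r) < s" using canon_right_size[OF dd r(1)] s by simp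
        moreover have "dyadic r" "c < r" using ro_props[OF dd r(1)] cd by auto
        ultimately show "\<not> game_le gr (canon c)" using IH[of c r] dc r(2) by blast
      qed
    }
    {
      assume cd: "c < d"
      show "\<not> game_le (canon d) (canon c)"
      proof
        assume le: "game_le (canon d) (canon c)"
        from NT[OF dc dd cd] show False
        proof
          assume "\<exists>l\<in>set (lo d). c \<le> l"
          then obtain l where l: "l \<in> set (lo d)" "c \<le> l" by blast
          have "size (canon c) + size (canon l) < s" using canon_left_size[OF dd l(1)] s by simp
          then have "game_le (canon c) (canon l)" using IH[of c l] dc lo_props[OF dd l(1)] l(2) by blast
          then show False using le_leftD[OF le canon_left_mem[OF dd l(1)]] by blast
        next
          assume "\<exists>r\<in>set (ro c). r \<le> d"
          then obtain r where r: "r \<in> set (ro c)" "r \<le> d" by blast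
          have "size (canon r) + size (canon d) < s" using canon_right_size[OF dc r(1)] s by simp
          then have "game_le (canon r) (canon d)" using IH[of r d] dd ro_props[OF dc r(1)] r(2) by blast
          then show False using le_rightD[OF le canon_right_mem[OF dc r(1)]] by blast
        qed
      qed
    }
  qed
qed

lemma canon_le: assumes "dyadic c" "dyadic d" shows "game_le (canon c) (canon d) \<longleftrightarrow> c \<le> d"
proof -
  have 1: "c \<le> d \<longrightarrow> game_le (canon c) (canon d)" using canon_order_aux[of "size (canon c) + size (canon d)"] assms by blast
  have 2: "d < c \<longrightarrow> \<not> game_le (canon c) (canon d)" using canon_order_aux[of "size (canon d) + size (canon c)"] assms by blast
  show ?thesis using 1 2 not_le by blast
qed

lemma dyadic_half: assumes "dyadic x" shows "dyadic (x / 2)"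
proof -
  obtain a i where x: "x = of_int a / 2^i" using assms unfolding dyadic_def by blast
  have "x / 2 = of_int a / 2^(Suc i)" unfolding x by simp
  then show ?thesis unfolding dyadic_def by blast
qed

lemma simplicity:
  assumes "dyadic l" "dyadic r" "l < r"
  shows "\<exists>y. dyadic y \<and> l < y \<and> y < r \<and> (\<forall>a\<in>set (lo y). a \<le> l) \<and> (\<forall>b\<in>set (ro y). r \<le> b)
           \<and> game_eq (Game [canon l] [canon r]) (canon y)"
proof -
  let ?P = "\<lambda>y. dyadic y \<and> l < y \<and> y < r"
  have "?P ((l + r) / 2)" using assms dyadic_half[OF dyadic_add[OF assms(1,2)]] by auto
  then obtain y where y: "?P y" and ymin: "\<And>z. ?P z \<Longrightarrow> size (canon y) \<le> size (canon z)"
    using ex_has_least_nat[of ?P _ "\<lambda>y. size (canon y)"] by blast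
  have A: "\<forall>a\<in>set (lo y). a \<le> l"
  proof
    fix a assume a: "a \<in> set (lo y)"
    have "dyadic a" "a < y" using lo_props[OF _ a] y by auto
    moreover have "size (canon a) < size (canon y)" using canon_left_size[OF _ a] y by auto
    ultimately show "a \<le> l" using ymin[of a] y by force
  qed
  have B: "\<forall>b\<in>set (ro y). r \<le> b"
  proof
    fix b assume b: "b \<in> set (ro y)"
    have "dyadic b" "y < b" using ro_props[OF _ b] y by auto
    moreover have "size (canon b) < size (canon y)" using canon_right_size[OF _ b] y by auto
    ultimately show "r \<le> b" using ymin[of b] y by force
  qed
  have "game_eq (Game [canon l] [canon r]) (canon y)"
  proof (rule recog)
    fix gl assume "gl \<in> set (left (Game [canon l] [canon r]))"
    then show "\<not> game_le (canon y) gl" using canon_le[of y l] y assms by auto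
  next
    fix gr assume "gr \<in> set (right (Game [canon l] [canon r]))"
    then show "\<not> game_le gr (canon y)" using canon_le[of r y] y assms by auto
  next
    fix xl assume "xl \<in> set (left (canon y))"
    then obtain a where a: "a \<in> set (lo y)" "xl = canon a" using canon_left_cases y by blast
    then have "game_le xl (canon l)" using canon_le[of a l] A lo_props[OF _ a(1)] y assms by auto
    then show "\<exists>gl\<in>set (left (Game [canon l] [canon r])). game_le xl gl" by simp
  next
    fix xr assume "xr \<in> set (right (canon y))"
    then obtain b where b: "b \<in> set (ro y)" "xr = canon b" using canon_right_cases y by blast
    then have "game_le (canon r) xr" using canon_le[of r b] B ro_props[OF _ b(1)] y assms by auto
    then show "\<exists>gr\<in>set (right (Game [canon l] [canon r])). game_le gr xr" by simp
  qed
  then show ?thesis using y A B by blast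
qed

lemma balanced_dexp:
  assumes dn: "dyadic n" and bal: "balanced n (- (1 / 2 ^ p))"
  shows "dexp n \<le> p"
proof (rule ccontr)
  assume "\<not> dexp n \<le> p"
  then have ep: "p < dexp n" by simp
  let ?l = "n + - (1 / 2 ^ p)" let ?r = "n - - (1 / 2 ^ p)"
  define B where "B = ball_game n (- (1 / 2 ^ p))"
  have B: "B = Game [canon ?l] [canon ?r]" unfolding B_def ball_game_def by simp
  have dl: "dyadic ?l" "dyadic ?r" using dyadic_diff[OF dn dyadic_pow] dyadic_add[OF dn dyadic_pow, of p] by auto
  have "?l < ?r" by simp
  then obtain y where y: "dyadic y" "?l < y" "y < ?r" "\<forall>a\<in>set (lo y). a \<le> ?l" "game_eq B (canon y)"
    using simplicity[OF dl] B by blast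
  have "y \<noteq> n"
  proof
    assume yn: "y = n"
    have "lo n = [n - 1 / 2^dexp n]" using ep unfolding lo_def by simp
    then have "n - 1 / 2^dexp n \<le> n - 1 / 2^p" using y(4) yn by simp
    then have "(1::rat) / 2^p \<le> 1 / 2^dexp n" by simp
    then have "(2::rat)^dexp n \<le> 2^p" by (simp add: field_simps)
    then have "dexp n \<le> p" by simp
    then show False using ep by simp
  qed
  have eqb: "game_eq (game_plus B B) (game_plus (canon n) (canon n))" using bal unfolding balanced_def B_def .
  show False
  proof (cases "y < n")
    case True
    have h1: "game_le (game_plus (canon n) (canon n)) (game_plus B B)" using eqb unfolding game_eq_def by blast
    have h2: "game_le (game_plus B B) (game_plus (canon y) B)" using y(5) plus_mono1 unfolding game_eq_def by blast
    have h3: "game_le (game_plus (canon y) B) (game_plus (canon y) (canon y))" using y(5) plus_mono2 unfolding game_eq_def by blast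
    have h4: "game_le (game_plus (canon y) (canon y)) (game_plus (canon y) (canon n))"
      using plus_mono2 canon_le[OF y(1) dn] True by auto
    have "game_le (game_plus (canon n) (canon n)) (game_plus (canon y) (canon n))"
      using h1 h2 h3 h4 le_trans by blast
    then have "game_le (canon n) (canon y)" using plus_mono1 by blast
    then show False using canon_le[OF dn y(1)] True by simp
  next
    case False
    then have ny: "n < y" using \<open>y \<noteq> n\<close> by simp
    have h1: "game_le (game_plus B B) (game_plus (canon n) (canon n))" using eqb unfolding game_eq_def by blast
    have h2: "game_le (game_plus (canon y) B) (game_plus B B)" using y(5) plus_mono1 unfolding game_eq_def by blast
    have h3: "game_le (game_plus (canon y) (canon y)) (game_plus (canon y) B)" using y(5) plus_mono2 unfolding game_eq_def by blast
    have h4: "game_le (game_plus (canon y) (canon n)) (game_plus (canon y) (canon y))"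
      using plus_mono2 canon_le[OF dn y(1)] ny by auto
    have "game_le (game_plus (canon y) (canon n)) (game_plus (canon n) (canon n))"
      using h1 h2 h3 h4 le_trans by blast
    then have "game_le (canon y) (canon n)" using plus_mono1 by blast
    then show False using canon_le[OF y(1) dn] ny by simp
  qed
qed

definition FF :: "rat \<Rightarrow> nat \<Rightarrow> nat \<Rightarrow> rat \<Rightarrow> rat" where
  "FF n p m t = n + 1/2^p - 1/2^(p+m) + t/2^(p+m+1)"

lemma FF_alt: "FF n p m t = n + 1/2^p - (1/2^p)*(1/2^m) + t * ((1/2^p)*(1/2^m)) / 2"
  by (simp add: FF_def power_add)

lemma FF_bounds: assumes "0 \<le> t" "t \<le> 1"
  shows "n - 1/2^p < FF n p m t \<and> FF n p m t < n + 1/2^p"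
proof -
  define D :: rat where "D = 1/2^p"
  define E :: rat where "E = D * (1/2^m)"
  have D: "0 < D" unfolding D_def by simp
  have u: "0 < (1::rat)/2^m" "(1::rat)/2^m \<le> 1" by simp_all
  have E: "0 < E" "E \<le> D" unfolding E_def using D u mult_left_mono[OF u(2), of D] by auto
  have tE: "0 \<le> t * E" "t * E \<le> E" using assms E mult_right_mono[OF assms(2), of E] by auto
  have "FF n p m t = n + D - E + t * E / 2" unfolding FF_alt D_def E_def by simp
  then show ?thesis using D E tE unfolding D_def[symmetric] by linarith
qed

lemma FF_shift: "FF n p m t + s / 2^(p+m+1) = FF n p m (t + s)"
  by (simp add: FF_def add_divide_distrib)

lemma FF_mono: "t1 < t2 \<Longrightarrow> FF n p m t1 < FF n p m t2"
  by (simp add: FF_def divide_strict_right_mono)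

lemma FF_cont: "FF n p m 1 = FF n p (Suc m) 0"
  by (simp add: FF_def power_add field_simps)

lemma FF_zero: "FF n p 0 0 = n"
  by (simp add: FF_def)

lemma dyadic_divpow: assumes "dyadic x" shows "dyadic (x / 2^k)"
proof -
  obtain a i where x: "x = of_int a / 2^i" using assms unfolding dyadic_def by blast
  have "x / 2^k = of_int a / 2^(i + k)" unfolding x by (simp add: power_add)
  then show ?thesis unfolding dyadic_def by blast
qed

lemma dyadic_FF: "dyadic n \<Longrightarrow> dyadic t \<Longrightarrow> dyadic (FF n p m t)"
  unfolding FF_def
  by (intro dyadic_add dyadic_diff dyadic_pow dyadic_divpow) auto

lemma even_scaled: assumes "dyadic n" "dexp n < K" shows "\<exists>i. n * 2^K = of_int (2 * i)"
proof -
  let ?e = "dexp n"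
  define j where "j = \<lfloor>n * 2^?e\<rfloor>"
  have e: "n * 2^?e = of_int j" using dexp_int[OF assms(1)] unfolding j_def by simp
  have "K = ?e + Suc (K - ?e - 1)" using assms(2) by simp
  then have "(2::rat)^K = 2^?e * (2 * 2^(K - ?e - 1))" by (metis power_add power_Suc)
  then have "n * 2^K = of_int (2 * (j * 2^(K - ?e - 1)))" using e by (simp add: algebra_simps)
  then show ?thesis by blast
qed

lemma odd_form:
  assumes "dyadic n" "dexp n < K" "x * 2^K = n * 2^K + of_int M" "odd M"
  shows "canon x = Game [canon (x - 1/2^K)] [canon (x + 1/2^K)]"
proof -
  obtain i where i: "n * 2^K = of_int (2 * i)" using even_scaled[OF assms(1,2)] by blast
  have x: "x = of_int (2 * i + M) / 2^K" using assms(3) i by (simp add: field_simps)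
  have K: "K > 0" using assms(2) by simp
  have "odd (2 * i + M)" using assms(4) by simp
  from canon_odd[OF this K] show ?thesis unfolding x[symmetric] .
qed

lemma step_recog:
  assumes dy: "dyadic l" "dyadic x" "dyadic xL" "dyadic xR"
    and lx: "l < x" and xxl: "xL < x" and xxr: "x < xR"
    and eqL: "game_eq gL (canon xL)"
    and Rs: "\<forall>g\<in>set Rs. \<exists>z. dyadic z \<and> x < z \<and> game_le (canon z) g"
    and Rs2: "\<exists>g\<in>set Rs. game_le g (canon xR)"
    and X: "canon x = Game [canon xL] [canon xR]"
  shows "game_eq (Game [canon l, gL] Rs) (canon x)"
proof (rule recog)
  fix gl assume "gl \<in> set (left (Game [canon l, gL] Rs))"
  then have "gl = canon l \<or> gl = gL" by simp
  then show "\<not> game_le (canon x) gl"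
  proof
    assume "gl = canon l" then show ?thesis using canon_le[of x l] dy lx by simp
  next
    assume gl: "gl = gL"
    show ?thesis
    proof
      assume "game_le (canon x) gl"
      then have "game_le (canon x) (canon xL)" using eqL gl le_trans unfolding game_eq_def by blast
      then show False using canon_le[of x xL] dy xxl by simp
    qed
  qed
next
  fix gr assume "gr \<in> set (right (Game [canon l, gL] Rs))"
  then obtain z where z: "dyadic z" "x < z" "game_le (canon z) gr" using Rs by auto
  show "\<not> game_le gr (canon x)"
  proof
    assume "game_le gr (canon x)"
    then have "game_le (canon z) (canon x)" using z le_trans by blast
    then show False using canon_le[of z x] dy z by simp
  qed
next
  fix xl assume "xl \<in> set (left (canon x))"
  then have "xl = canon xL" using X by simp
  then show "\<exists>gl\<in>set (left (Game [canon l, gL] Rs)). game_le xl gl" using eqL unfolding game_eq_def by auto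
next
  fix xr assume "xr \<in> set (right (canon x))"
  then have "xr = canon xR" using X by simp
  then show "\<exists>gr\<in>set (right (Game [canon l, gL] Rs)). game_le gr xr" using Rs2 by auto
qed

lemma inv_pow_le: "e \<le> p \<Longrightarrow> (1::rat) / 2^p \<le> 1 / 2^e"
proof -
  assume "e \<le> p"
  then have "(2::rat)^e \<le> 2^p" by (rule power_increasing) simp
  then show ?thesis by (simp add: field_simps)
qed

lemma B_eq: assumes dn: "dyadic n" and ep: "dexp n \<le> p"
  shows "game_eq (ball_game n (- (1 / 2 ^ p))) (canon n)"
proof -
  let ?l = "n + - (1 / 2 ^ p)" let ?r = "n - - (1 / 2 ^ p)"
  have dl: "dyadic ?l" "dyadic ?r" using dyadic_diff[OF dn dyadic_pow] dyadic_add[OF dn dyadic_pow, of p] by auto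
  have "game_eq (Game [canon ?l] [canon ?r]) (canon n)"
  proof (rule recog)
    fix gl assume "gl \<in> set (left (Game [canon ?l] [canon ?r]))"
    have "?l < n" by simp
    then have "\<not> game_le (canon n) (canon ?l)" using canon_le[OF dn dl(1)] by linarith
    then show "\<not> game_le (canon n) gl" using \<open>gl \<in> _\<close> by simp
  next
    fix gr assume "gr \<in> set (right (Game [canon ?l] [canon ?r]))"
    have "n < ?r" by simp
    then have "\<not> game_le (canon ?r) (canon n)" using canon_le[OF dl(2) dn] by linarith
    then show "\<not> game_le gr (canon n)" using \<open>gr \<in> _\<close> by simp
  next
    fix xl assume "xl \<in> set (left (canon n))"
    then obtain a where a: "a \<in> set (lo n)" "xl = canon a" using canon_left_cases[OF dn] by blast
    have "a \<le> ?l"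
    proof (cases "dexp n = 0")
      case True
      then have "a = n - 1" using a(1) unfolding lo_def by (cases "0 < n") auto
      moreover have "(1::rat) / 2^p \<le> 1" by simp
      ultimately show ?thesis by simp
    next
      case False
      then have "a = n - 1 / 2^dexp n" using a(1) unfolding lo_def by simp
      then show ?thesis using inv_pow_le[OF ep] by simp
    qed
    then have "game_le xl (canon ?l)" using canon_le[OF _ dl(1)] lo_props[OF dn a(1)] a(2) by auto
    then show "\<exists>gl\<in>set (left (Game [canon ?l] [canon ?r])). game_le xl gl" by simp
  next
    fix xr assume "xr \<in> set (right (canon n))"
    then obtain b where b: "b \<in> set (ro n)" "xr = canon b" using canon_right_cases[OF dn] by blast
    have "?r \<le> b"
    proof (cases "dexp n = 0")
      case True
      then have "b = n + 1" using b(1) unfolding ro_def by (cases "n < 0") auto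
      moreover have "(1::rat) / 2^p \<le> 1" by simp
      ultimately show ?thesis by simp
    next
      case False
      then have "b = n + 1 / 2^dexp n" using b(1) unfolding ro_def by simp
      then show ?thesis using inv_pow_le[OF ep] by simp
    qed
    then have "game_le (canon ?r) xr" using canon_le[OF dl(2)] ro_props[OF dn b(1)] b(2) by auto
    then show "\<exists>gr\<in>set (right (Game [canon ?l] [canon ?r])). game_le gr xr" by simp
  qed
  then show ?thesis by (simp add: ball_game_def)
qed

lemma Lint: assumes dn: "dyadic n" and ep: "dexp n \<le> p"
  shows "game_eq (ordsum (ball_game n (- (1 / 2 ^ p))) (canon (of_nat m))) (canon (FF n p m 0))"
proof (induction m)
  case 0
  have "canon (of_nat 0) = Game [] []" using canon_int[of 0] int_game_zero by simp
  then have "ordsum (ball_game n (- (1 / 2 ^ p))) (canon (of_nat 0)) = ball_game n (- (1 / 2 ^ p))"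
    by (simp add: ball_game_def)
  then show ?case using B_eq[OF dn ep] by (simp add: FF_zero)
next
  case (Suc m)
  let ?B = "ball_game n (- (1 / 2 ^ p))"
  let ?l = "n + - (1 / 2 ^ p)" let ?r = "n - - (1 / 2 ^ p)"
  have dl: "dyadic ?l" "dyadic ?r" using dyadic_diff[OF dn dyadic_pow] dyadic_add[OF dn dyadic_pow, of p] by auto
  have eqm: "(of_nat (Suc m) :: rat) = of_int (int m + 1)" by simp
  have "canon (of_nat (Suc m)) = int_game (int m + 1)" unfolding eqm by (rule canon_int)
  also have "\<dots> = Game [int_game (int m)] []" using int_game_pos[of "int m + 1"] by simp
  also have "int_game (int m) = canon (of_nat m)" using canon_int[of "int m"] by simp
  finally have cm: "canon (of_nat (Suc m)) = Game [canon (of_nat m)] []" .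
  have G: "ordsum ?B (canon (of_nat (Suc m))) = Game [canon ?l, ordsum ?B (canon (of_nat m))] [canon ?r]"
    unfolding cm by (simp add: ball_game_def)
  let ?x = "FF n p (Suc m) 0"
  let ?K = "p + Suc m"
  have x2: "?x * 2^?K = n * 2^?K + of_int (2^Suc m - 1)"
    by (simp add: FF_def field_simps power_add)
  have X0: "canon ?x = Game [canon (?x - 1/2^?K)] [canon (?x + 1/2^?K)]"
    by (rule odd_form[OF dn _ x2]) (use ep in auto)
  have e1: "?x - 1/2^?K = FF n p m 0" by (simp add: FF_def field_simps power_add)
  have e2: "?x + 1/2^?K = ?r" by (simp add: FF_def field_simps power_add)
  have X: "canon ?x = Game [canon (FF n p m 0)] [canon ?r]" using X0 e1 e2 by simp
  have dx: "dyadic ?x" "dyadic (FF n p m 0)" using dyadic_FF[OF dn] dyadic_of_int[of 0] by auto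
  have b1: "?l < ?x" "?x < ?r" using FF_bounds[of 0 n p "Suc m"] by auto
  have b2: "FF n p m 0 < ?x" using FF_mono[of 0 1 n p m] FF_cont by simp
  have "game_eq (Game [canon ?l, ordsum ?B (canon (of_nat m))] [canon ?r]) (canon ?x)"
  proof (rule step_recog[OF dl(1) dx(1) dx(2) dl(2) b1(1) b2 b1(2) Suc _ _ X])
    show "\<forall>g\<in>set [canon ?r]. \<exists>z. dyadic z \<and> ?x < z \<and> game_le (canon z) g"
      using dl b1 le_refl by auto
    show "\<exists>g\<in>set [canon ?r]. game_le g (canon ?r)" using le_refl by auto
  qed
  then show ?case unfolding G .
qed

lemma Lfrac: assumes dn: "dyadic n" and ep: "dexp n \<le> p"
  shows "\<forall>b m. b \<le> 2^k \<longrightarrow> game_eq (ordsum (ball_game n (- (1 / 2 ^ p))) (canon (of_nat m + of_nat b / 2^k)))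
                 (canon (FF n p m (of_nat b / 2^k)))"
proof (induction k)
  case 0
  show ?case
  proof (intro allI impI)
    fix b m :: nat assume "b \<le> 2^0"
    then have "b = 0 \<or> b = 1" by auto
    then show "game_eq (ordsum (ball_game n (- (1 / 2 ^ p))) (canon (of_nat m + of_nat b / 2^0)))
                 (canon (FF n p m (of_nat b / 2^0)))"
    proof
      assume "b = 0" then show ?thesis using Lint[OF dn ep, of m] by simp
    next
      assume b1: "b = 1"
      have e1: "(of_nat m + of_nat b / 2^0 :: rat) = of_nat (Suc m)" using b1 by simp
      have e2: "FF n p m (of_nat b / 2^0) = FF n p (Suc m) 0" using FF_cont b1 by simp
      show ?thesis unfolding e1 e2 by (rule Lint[OF dn ep])
    qed
  qed
next
  case (Suc k)
  let ?B = "ball_game n (- (1 / 2 ^ p))"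
  let ?l = "n + - (1 / 2 ^ p)" let ?r = "n - - (1 / 2 ^ p)"
  have dl: "dyadic ?l" "dyadic ?r" using dyadic_diff[OF dn dyadic_pow] dyadic_add[OF dn dyadic_pow, of p] by auto
  show ?case
  proof (intro allI impI)
    fix b m :: nat assume bk: "b \<le> 2^Suc k"
    show "game_eq (ordsum ?B (canon (of_nat m + of_nat b / 2^Suc k))) (canon (FF n p m (of_nat b / 2^Suc k)))"
    proof (cases "even b")
      case True
      then obtain c where c: "b = 2*c" by blast
      have "c \<le> 2^k" using bk c by simp
      have "(of_nat b / 2^Suc k :: rat) = of_nat c / 2^k" using c by simp
      then show ?thesis using Suc.IH \<open>c \<le> 2^k\<close> by simp
    next
      case False
      define c where "c = b div 2"
      have bc: "b = 2*c + 1" using False c_def by presburger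
      have "(2::nat)^Suc k = 2 * 2^k" by simp
      then have c1: "c \<le> 2^k" "c + 1 \<le> 2^k" using bk bc by presburger+
      define t where "t = (of_nat b / 2^Suc k :: rat)"
      define t1 where "t1 = (of_nat c / 2^k :: rat)"
      define t2 where "t2 = (of_nat (c + 1) / 2^k :: rat)"
      have ht1: "t1 = t - 1/2^Suc k" unfolding t_def t1_def bc by (simp add: field_simps)
      have ht2: "t2 = t + 1/2^Suc k" unfolding t_def t2_def bc by (simp add: field_simps)
      have t01: "0 \<le> t" "t \<le> 1"
      proof -
        show "0 \<le> t" unfolding t_def by simp
        have "(of_nat b :: rat) \<le> of_nat (2^Suc k)" using bk by (simp only: of_nat_le_iff)
        then show "t \<le> 1" unfolding t_def by simp
      qed
      have tt: "t1 < t" "t < t2" using ht1 ht2 by simp_all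
      have dt: "dyadic t" "dyadic t1" "dyadic t2" unfolding t_def t1_def t2_def
        using dyadic_divpow dyadic_of_nat by blast+
      let ?v = "of_nat m + t" let ?vL = "of_nat m + t1" let ?vR = "of_nat m + t2"
      define J where "J = int m * 2^Suc k + int b"
      have vJ: "?v = of_int J / 2^Suc k" unfolding J_def t_def by (simp add: field_simps)
      have oJ: "odd J" unfolding J_def using False by simp
      have cv0: "canon ?v = Game [canon (?v - 1/2^Suc k)] [canon (?v + 1/2^Suc k)]"
        unfolding vJ by (rule canon_odd[OF oJ]) simp
      have a1: "?v - 1/2^Suc k = ?vL" using ht1 by simp
      have a2: "?v + 1/2^Suc k = ?vR" using ht2 by simp
      have cv: "canon ?v = Game [canon ?vL] [canon ?vR]" using cv0 unfolding a1 a2 .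
      have G: "ordsum ?B (canon ?v) = Game [canon ?l, ordsum ?B (canon ?vL)] [canon ?r, ordsum ?B (canon ?vR)]"
        unfolding cv by (simp add: ball_game_def)
      have IH1: "game_eq (ordsum ?B (canon ?vL)) (canon (FF n p m t1))"
        using Suc.IH c1(1) unfolding t1_def by blast
      have IH2: "game_eq (ordsum ?B (canon ?vR)) (canon (FF n p m t2))"
        using Suc.IH c1(2) unfolding t2_def by blast
      let ?x = "FF n p m t"
      let ?K = "p + m + Suc k + 1"
      define M where "M = (2::int)^(m + Suc k + 1) - 2^(Suc k + 1) + int b"
      have x2: "?x * 2^?K = n * 2^?K + of_int M"
        unfolding M_def FF_def t_def by (simp add: field_simps power_add)
      have oM: "odd M" unfolding M_def using False by simp
      have X0: "canon ?x = Game [canon (?x - 1/2^?K)] [canon (?x + 1/2^?K)]"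
        by (rule odd_form[OF dn _ x2 oM]) (use ep in auto)
      have e1: "?x - 1/2^?K = FF n p m t1" unfolding ht1 FF_def by (simp add: field_simps power_add)
      have e2: "?x + 1/2^?K = FF n p m t2" unfolding ht2 FF_def by (simp add: field_simps power_add)
      have X: "canon ?x = Game [canon (FF n p m t1)] [canon (FF n p m t2)]" using X0 e1 e2 by simp
      have dx: "dyadic ?x" "dyadic (FF n p m t1)" "dyadic (FF n p m t2)" using dyadic_FF[OF dn] dt by auto
      have b1: "?l < ?x" "?x < ?r" using FF_bounds[OF t01, of n p m] by auto
      have b2: "FF n p m t1 < ?x" "?x < FF n p m t2" using FF_mono tt by auto
      have "game_eq (Game [canon ?l, ordsum ?B (canon ?vL)] [canon ?r, ordsum ?B (canon ?vR)]) (canon ?x)"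
      proof (rule step_recog[OF dl(1) dx(1) dx(2) dx(3) b1(1) b2(1) b2(2) IH1 _ _ X])
        show "\<forall>g\<in>set [canon ?r, ordsum ?B (canon ?vR)]. \<exists>z. dyadic z \<and> ?x < z \<and> game_le (canon z) g"
          using dl b1 b2 dx le_refl IH2 unfolding game_eq_def by auto
        show "\<exists>g\<in>set [canon ?r, ordsum ?B (canon ?vR)]. game_le g (canon (FF n p m t2))"
          using IH2 unfolding game_eq_def by auto
      qed
      then show ?thesis unfolding t_def[symmetric] G[symmetric] .
    qed
  qed
qed

theorem theorem4p5:
  fixes n :: rat and p m q a :: nat and H :: game
  assumes "dyadic n"
    and "balanced n (- (1 / 2 ^ p))"
    and "(odd a \<and> 0 < a \<and> a < 2 ^ q) \<or> a = 0"
    and "of_nat m + of_nat a / 2 ^ q > (0::rat)"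
    and "game_eq H (canon (of_nat m + of_nat a / 2 ^ q))"
  shows "game_eq (ordsum (ball_game n (- (1 / 2 ^ p))) H)
           (canon (n + 1 / 2 ^ p - 1 / 2 ^ (p + m) + of_nat a / 2 ^ (p + m + q + 1)))"
proof -
  have ep: "dexp n \<le> p" using balanced_dexp[OF assms(1,2)] .
  have aq: "a \<le> 2^q" using assms(3) by auto
  have 1: "game_eq (ordsum (ball_game n (- (1 / 2 ^ p))) (canon (of_nat m + of_nat a / 2^q)))
                 (canon (FF n p m (of_nat a / 2^q)))"
    using Lfrac[OF assms(1) ep, of q] aq by blast
  have 2: "game_eq (ordsum (ball_game n (- (1 / 2 ^ p))) H) (ordsum (ball_game n (- (1 / 2 ^ p))) (canon (of_nat m + of_nat a / 2^q)))"
    using ordsum_eq[OF assms(5)] .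
  have 3: "FF n p m (of_nat a / 2^q) = n + 1 / 2 ^ p - 1 / 2 ^ (p + m) + of_nat a / 2 ^ (p + m + q + 1)"
    unfolding FF_def by (simp add: power_add field_simps)
  show ?thesis using eq_trans[OF 2 1] unfolding 3 .
qed

end
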